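(* Let $M,N\in\mathbb{N}^*$ and let $F$ be a set of $M+1$ points of $[0,1]$ whose elements satisfy $\rho_0=0<\rho_1<\dots<\rho_M=1$. Let $X(1/N)=\{t\in\,]0,1]:\ ]t-1/N,t]\cap F=\emptyset\}$. Then \[ \mathrm{card}\Big\{j\in\{1,\dots,N\}:\ \Big]\frac{j-1}{N},\frac jN\Big]\cap F=\emptyset\Big\} = N\,\mathrm{mes}\big(X(1/N)\big)+\sum_{\substack{1\le i\le M\\ \rho_i-\rho_{i-1}\ge 1/N}}\big(\{-N\rho_i\}-\{-N\rho_{i-1}\}\big). \]
   Context: $\mathrm{mes}$ denotes Lebesgue measure and $\{x\}$ the fractional part of the real number $x$. *)

theory Defs
  imports "HOL-Analysis.Analysis"
begin

end

theory Submission imports Defs begin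

lemma meas_Ico: "measure lebesgue {a..<b::real} = max 0 (b - a)"
proof (cases "a \<le> b")
  case True
  have "measure lebesgue {a..<b} = measure lborel {a..<b}"
    by (simp add: measure_completion)
  then show ?thesis using True measure_lborel_Ico by auto
qed auto

lemma emeas_Ico: "emeasure lebesgue {a..<b::real} \<noteq> \<infinity>"
proof (cases "a \<le> b")
  case True
  have "emeasure lebesgue {a..<b} = emeasure lborel {a..<b}"
    by (simp add: emeasure_completion)
  then show ?thesis using True emeasure_lborel_Ico by auto
qed auto

lemma weak_mono:
  assumes mono: "\<forall>i<M. \<rho> i < \<rho> (Suc i)"
  shows "i \<le> k \<Longrightarrow> k \<le> M \<Longrightarrow> (\<rho> i :: real) \<le> \<rho> k"
proof (induction k rule: dec_induct)
  case base then show ?case by simp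
next
  case (step n) then show ?case using mono by (meson Suc_le_lessD less_imp_le order.trans)
qed

lemma key:
  fixes \<rho> :: "nat \<Rightarrow> real"
  assumes mono: "\<forall>i<M. \<rho> i < \<rho> (Suc i)"
    and "\<rho> 0 = 0" "\<rho> M = 1" "h > 0" "0 < t" "t \<le> 1"
  shows "({t-h<..t} \<inter> \<rho>`{0..M} = {}) \<longleftrightarrow> (\<exists>i\<in>{1..M}. \<rho>(i-1)+h \<le> t \<and> t < \<rho> i)"
proof
  assume E: "{t-h<..t} \<inter> \<rho>`{0..M} = {}"
  define i where "i = (LEAST i. t \<le> \<rho> i)"
  have ex: "t \<le> \<rho> M" using assms by simp
  have iM: "i \<le> M" unfolding i_def using ex by (rule Least_le)
  have ti: "t \<le> \<rho> i" unfolding i_def using ex by (rule LeastI)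
  have i0: "i \<noteq> 0" using ti assms by (metis not_le)
  have "\<not> t \<le> \<rho> (i-1)" unfolding i_def by (rule not_less_Least) (use i0 i_def in auto)
  moreover have "\<rho> i \<noteq> t"
  proof
    assume "\<rho> i = t"
    then have "\<rho> i \<in> {t-h<..t} \<inter> \<rho>`{0..M}" using iM \<open>h>0\<close> by auto
    then show False using E by blast
  qed
  moreover have "\<rho> (i-1) \<notin> {t-h<..t}" using E iM by auto
  ultimately show "\<exists>i\<in>{1..M}. \<rho>(i-1)+h \<le> t \<and> t < \<rho> i"
    using iM i0 ti by (intro bexI[of _ i]) auto
next
  assume "\<exists>i\<in>{1..M}. \<rho>(i-1)+h \<le> t \<and> t < \<rho> i"
  then obtain i where i: "1 \<le> i" "i \<le> M" "\<rho>(i-1)+h \<le> t" "t < \<rho> i" by auto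
  show "{t-h<..t} \<inter> \<rho>`{0..M} = {}"
  proof (rule ccontr)
    assume "\<not> ?thesis"
    then obtain k where k: "k \<le> M" "t - h < \<rho> k" "\<rho> k \<le> t" by auto
    show False
    proof (cases "k \<le> i - 1")
      case True
      then have "\<rho> k \<le> \<rho> (i-1)" using weak_mono[OF mono] i by simp
      then show False using i k by linarith
    next
      case False
      then have "\<rho> i \<le> \<rho> k" using weak_mono[OF mono] k by simp
      then show False using i k by linarith
    qed
  qed
qed

lemma uniq:
  fixes \<rho> :: "nat \<Rightarrow> real"
  assumes mono: "\<forall>i<M. \<rho> i < \<rho> (Suc i)" and "h > 0"
    and "i \<in> {1..M}" "k \<in> {1..M}" "i \<noteq> k"
    and "\<rho>(i-1)+h \<le> t" "t < \<rho> i" "\<rho>(k-1)+h \<le> t" "t < \<rho> k"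
  shows False
proof -
  { fix i k assume "i \<in> {1..M}" "k \<in> {1..M}" "i < k"
      "\<rho>(i-1)+h \<le> t" "t < \<rho> i" "\<rho>(k-1)+h \<le> t" "t < \<rho> k"
    then have "\<rho> i \<le> \<rho> (k-1)" using weak_mono[OF mono, of i "k-1"] by auto
    then have False using \<open>h>0\<close> \<open>t < \<rho> i\<close> \<open>\<rho>(k-1)+h \<le> t\<close> by linarith }
  then show False using assms by (metis linorder_neqE_nat)
qed

lemma card_int:
  assumes "0 \<le> A"
  shows "card {j::nat. A \<le> int j \<and> int j < B} = nat (B - A)"
proof -
  have "{j::nat. A \<le> int j \<and> int j < B} = {nat A..<nat B}" using assms by auto
  then show ?thesis using assms by simp
qed

lemma per_gap:
  fixes x y :: real assumes "x < y"
  shows "real (nat (\<lceil>y\<rceil> - (\<lceil>x\<rceil> + 1))) = max 0 (y - x - 1) + (if y - x \<ge> 1 then frac (-y) - frac (-x) else 0)"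
proof -
  have fy: "frac (-y) = \<lceil>y\<rceil> - y" and fx: "frac (-x) = \<lceil>x\<rceil> - x"
    by (simp_all add: frac_def ceiling_def)
  show ?thesis
  proof (cases "y - x \<ge> 1")
    case True
    then have "\<lceil>x\<rceil> + 1 \<le> \<lceil>y\<rceil>"
      by (metis ceiling_add_one ceiling_mono le_diff_eq add.commute)
    then show ?thesis using True fx fy by simp
  next
    case False
    then have "\<lceil>y\<rceil> \<le> \<lceil>x\<rceil> + 1"
      by (metis ceiling_add_one ceiling_mono less_eq_real_def add.commute not_le diff_less_eq)
    then show ?thesis using False by simp
  qed
qed


lemma conv1: fixes n a j :: real assumes "n > 0"
  shows "(a + 1/n \<le> j/n) \<longleftrightarrow> (n*a + 1 \<le> j)"
proof -
  have "a + 1/n = (n*a+1)/n" using assms by (simp add: field_simps)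
  then show ?thesis using assms by (simp add: divide_le_cancel)
qed
lemma conv2: fixes n b j :: real assumes "n > 0"
  shows "(j/n < b) \<longleftrightarrow> (j < n*b)"
  using assms by (simp add: divide_less_eq mult.commute)

theorem proposition4:
  fixes M N :: nat and \<rho> :: "nat \<Rightarrow> real" and F X :: "real set"
  assumes "M \<ge> 1" and "N \<ge> 1"
    and "\<rho> 0 = 0" and "\<rho> M = 1"
    and "\<forall>i<M. \<rho> i < \<rho> (Suc i)"
    and "F = \<rho> ` {0..M}"
    and "X = {t \<in> {0<..1}. {t - 1 / real N<..t} \<inter> F = {}}"
  shows "real (card {j \<in> {1..N}. {(real j - 1) / real N<..real j / real N} \<inter> F = {}})
           = real N * measure lebesgue X
             + (\<Sum>i\<in>{i \<in> {1..M}. \<rho> i - \<rho> (i - 1) \<ge> 1 / real N}.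
                  frac (- (real N * \<rho> i)) - frac (- (real N * \<rho> (i - 1))))"
proof -
  note mono = assms(5)
  define h where "h = 1 / real N"
  have Npos: "real N > 0" using assms by simp
  have hpos: "h > 0" using Npos by (simp add: h_def)
  have rho_nonneg: "\<rho> k \<ge> 0" if "k \<le> M" for k
    using weak_mono[OF mono, of 0 k] that assms by simp
  have rho_le1: "\<rho> k \<le> 1" if "k \<le> M" for k
    using weak_mono[OF mono, of k M] that assms by simp
  define J where "J i = {j\<in>{1..N}. \<rho>(i-1)+h \<le> real j / real N \<and> real j / real N < \<rho> i}" for i
  have S_eq: "{j \<in> {1..N}. {(real j - 1) / real N<..real j / real N} \<inter> F = {}} = (\<Union>i\<in>{1..M}. J i)"
  proof (intro set_eqI iffI)
    fix j assume "j \<in> {j \<in> {1..N}. {(real j - 1) / real N<..real j / real N} \<inter> F = {}}"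
    then have j: "j \<in> {1..N}" "{real j / real N - h<..real j / real N} \<inter> \<rho>`{0..M} = {}"
      using assms(6) by (auto simp: h_def diff_divide_distrib)
    have "0 < real j / real N" "real j / real N \<le> 1" using j(1) Npos by auto
    from key[OF mono assms(3,4) hpos this] j show "j \<in> (\<Union>i\<in>{1..M}. J i)" by (auto simp: J_def)
  next
    fix j assume "j \<in> (\<Union>i\<in>{1..M}. J i)"
    then have j: "j \<in> {1..N}" "\<exists>i\<in>{1..M}. \<rho>(i-1)+h \<le> real j / real N \<and> real j / real N < \<rho> i"
      by (auto simp: J_def)
    have "0 < real j / real N" "real j / real N \<le> 1" using j(1) Npos by auto
    from key[OF mono assms(3,4) hpos this] j show "j \<in> {j \<in> {1..N}. {(real j - 1) / real N<..real j / real N} \<inter> F = {}}"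
      using assms(6) by (auto simp: h_def diff_divide_distrib)
  qed
  have card_S: "card (\<Union>i\<in>{1..M}. J i) = (\<Sum>i\<in>{1..M}. card (J i))"
  proof (rule card_UN_disjoint)
    show "\<forall>i\<in>{1..M}. \<forall>k\<in>{1..M}. i \<noteq> k \<longrightarrow> J i \<inter> J k = {}"
      using uniq[OF mono hpos] unfolding J_def by blast
  qed (auto simp: J_def)
  have card_J: "real (card (J i)) = max 0 (real N * \<rho> i - real N * \<rho> (i-1) - 1)
      + (if real N * \<rho> i - real N * \<rho> (i-1) \<ge> 1 then frac (- (real N * \<rho> i)) - frac (- (real N * \<rho> (i - 1))) else 0)"
    if i: "i \<in> {1..M}" for i
  proof -
    have "J i = {j::nat. \<lceil>real N * \<rho>(i-1)\<rceil> + 1 \<le> int j \<and> int j < \<lceil>real N * \<rho> i\<rceil>}"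
    proof (intro set_eqI iffI)
      fix j assume "j \<in> J i"
      then have "\<rho>(i-1)+h \<le> real j / real N" "real j / real N < \<rho> i" by (auto simp: J_def)
      then have "real N * \<rho>(i-1) + 1 \<le> real j" "real j < real N * \<rho> i"
        using Npos conv1 conv2 unfolding h_def by metis+
      then show "j \<in> {j::nat. \<lceil>real N * \<rho>(i-1)\<rceil> + 1 \<le> int j \<and> int j < \<lceil>real N * \<rho> i\<rceil>}"
        by (simp add: ceiling_le_iff less_ceiling_iff) linarith
    next
      fix j assume "j \<in> {j::nat. \<lceil>real N * \<rho>(i-1)\<rceil> + 1 \<le> int j \<and> int j < \<lceil>real N * \<rho> i\<rceil>}"
      then have a: "real N * \<rho>(i-1) + 1 \<le> real j" "real j < real N * \<rho> i"
        by (auto simp: ceiling_le_iff less_ceiling_iff) linarith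
      have r: "\<rho>(i-1)+h \<le> real j / real N" "real j / real N < \<rho> i"
        using a Npos conv1 conv2 unfolding h_def by metis+
      have nn: "0 \<le> real N * \<rho>(i-1)" using rho_nonneg[of "i-1"] i by (simp add: Suc_leD le_diff_conv)
      have "real N * \<rho> i \<le> real N" using rho_le1[of i] i Npos by simp
      moreover have "1 \<le> real j" using a nn by linarith
      moreover have "real j \<le> real N" using a \<open>real N * \<rho> i \<le> real N\<close> by linarith
      ultimately have "1 \<le> j" "j \<le> N" by simp_all
      then show "j \<in> J i" using r by (auto simp: J_def)
    qed
    moreover have "0 \<le> \<lceil>real N * \<rho>(i-1)\<rceil> + 1"
    proof -
      have "0 \<le> real N * \<rho>(i-1)" using rho_nonneg[of "i-1"] i by (simp add: Suc_leD le_diff_conv)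
      then show ?thesis by linarith
    qed
    ultimately have "card (J i) = nat (\<lceil>real N * \<rho> i\<rceil> - (\<lceil>real N * \<rho>(i-1)\<rceil> + 1))"
      using card_int by simp
    moreover have "real N * \<rho>(i-1) < real N * \<rho> i"
    proof -
      have "i - 1 < M" "Suc (i-1) = i" using i by auto
      then have "\<rho> (i-1) < \<rho> i" using mono by metis
      then show ?thesis using Npos by simp
    qed
    ultimately show ?thesis using per_gap by simp
  qed
  have X_eq: "X = (\<Union>i\<in>{1..M}. {\<rho>(i-1)+h..<\<rho> i})"
  proof (intro set_eqI iffI)
    fix t assume "t \<in> X"
    then have t: "0 < t" "t \<le> 1" "{t-h<..t} \<inter> \<rho>`{0..M} = {}" using assms(6,7) by (auto simp: h_def)
    from key[OF mono assms(3,4) hpos t(1,2)] t(3) show "t \<in> (\<Union>i\<in>{1..M}. {\<rho>(i-1)+h..<\<rho> i})" by auto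
  next
    fix t assume "t \<in> (\<Union>i\<in>{1..M}. {\<rho>(i-1)+h..<\<rho> i})"
    then obtain i where i: "i \<in> {1..M}" "\<rho>(i-1)+h \<le> t" "t < \<rho> i" by auto
    have "i - 1 \<le> M" using i by auto
    then have "0 \<le> \<rho> (i-1)" by (rule rho_nonneg)
    moreover have "\<rho> i \<le> 1" using i by (intro rho_le1) auto
    ultimately have t: "0 < t" "t \<le> 1" using i hpos by linarith+
    have "{t-h<..t} \<inter> \<rho>`{0..M} = {}" using key[OF mono assms(3,4) hpos t] i by blast
    then show "t \<in> X" using assms(6,7) t unfolding h_def by simp
  qed
  have meas: "measure lebesgue X = (\<Sum>i\<in>{1..M}. max 0 (\<rho> i - \<rho>(i-1) - h))"
  proof -
    have "measure lebesgue (\<Union>i\<in>{1..M}. {\<rho>(i-1)+h..<\<rho> i}) = (\<Sum>i\<in>{1..M}. measure lebesgue {\<rho>(i-1)+h..<\<rho> i})"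
    proof (rule measure_finite_Union)
      show "disjoint_family_on (\<lambda>i. {\<rho>(i-1)+h..<\<rho> i}) {1..M}"
        unfolding disjoint_family_on_def
      proof (intro ballI impI equalityI subsetI)
        fix i k t assume ik: "i \<in> {1..M}" "k \<in> {1..M}" "i \<noteq> k"
          and "t \<in> {\<rho>(i-1)+h..<\<rho> i} \<inter> {\<rho>(k-1)+h..<\<rho> k}"
        then have "\<rho>(i-1)+h \<le> t" "t < \<rho> i" "\<rho>(k-1)+h \<le> t" "t < \<rho> k" by auto
        from uniq[OF mono hpos ik this] show "t \<in> {}" by simp
      qed simp
      show "(\<lambda>i. {\<rho>(i-1)+h..<\<rho> i}) ` {1..M} \<subseteq> sets lebesgue" by auto
      show "\<And>i. i \<in> {1..M} \<Longrightarrow> emeasure lebesgue {\<rho>(i-1)+h..<\<rho> i} \<noteq> \<infinity>" by (rule emeas_Ico)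
    qed simp
    then show ?thesis unfolding X_eq meas_Ico by (simp add: algebra_simps)
  qed
  have pi: "real (card (J i)) = real N * max 0 (\<rho> i - \<rho>(i-1) - h)
      + (if \<rho> i - \<rho> (i - 1) \<ge> 1 / real N then frac (- (real N * \<rho> i)) - frac (- (real N * \<rho> (i - 1))) else 0)"
    if i: "i \<in> {1..M}" for i
  proof -
    have e1: "real N * max 0 (\<rho> i - \<rho>(i-1) - h) = max 0 (real N * \<rho> i - real N * \<rho> (i-1) - 1)"
      using Npos by (simp add: max_mult_distrib_left h_def right_diff_distrib)
    have e2: "(real N * \<rho> i - real N * \<rho> (i-1) \<ge> 1) \<longleftrightarrow> (\<rho> i - \<rho> (i - 1) \<ge> 1 / real N)"
      using Npos by (simp add: pos_divide_le_eq right_diff_distrib[symmetric] mult.commute)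
    show ?thesis using card_J[OF i] e1 e2 by simp
  qed
  have "real (card {j \<in> {1..N}. {(real j - 1) / real N<..real j / real N} \<inter> F = {}})
      = (\<Sum>i\<in>{1..M}. real (card (J i)))" unfolding S_eq card_S by simp
  also have "\<dots> = (\<Sum>i\<in>{1..M}. real N * max 0 (\<rho> i - \<rho>(i-1) - h)
      + (if \<rho> i - \<rho> (i - 1) \<ge> 1 / real N then frac (- (real N * \<rho> i)) - frac (- (real N * \<rho> (i - 1))) else 0))"
    using pi by (rule sum.cong[OF refl])
  also have "\<dots> = real N * measure lebesgue X
             + (\<Sum>i\<in>{i \<in> {1..M}. \<rho> i - \<rho> (i - 1) \<ge> 1 / real N}.
                  frac (- (real N * \<rho> i)) - frac (- (real N * \<rho> (i - 1))))"
    unfolding meas sum.distrib sum_distrib_left sum.inter_filter[OF finite_atLeastAtMost] by simp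
  finally show ?thesis .
qed
end
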